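(* Let $q_1=\dfrac{\rho\varepsilon}{1-\rho(1-\varepsilon)}$ and $q_2=(1-\varepsilon)^{I-1}$, and let $\bar\varepsilon\in(0,1)$ be the unique value of $\varepsilon$ at which $q_1=q_2$. If $0<\varepsilon<\bar\varepsilon$ then for every information tree $\mathcal T$ and every $p$: $C^p_{\mathcal T}(G)=\Omega$ if $p\le q_1$; $C^p_{\mathcal T}(G)=Y^*$ if $q_1<p\le q_2$; $C^p_{\mathcal T}(G)=\varnothing$ if $p>q_2$.
   Context: Model. Fix an integer $I\ge2$, agents $\mathcal I=\{1,\dots,I\}$, a prior $\rho\in(0,1)$ and a loss probability $\varepsilon\in(0,1)$. A state of nature $\theta\in\{g,b\}$ has $\Pr(\theta=g)=\rho$. A forest $F$ on $\mathcal I$ is a collection of vertex-disjoint undirected trees $T^1,\dots,T^R$ whose vertex sets partition $\mathcal I$; a seeding $s=(s^1,\dots,s^R)$ chooses exactly one vertex $s^r$ of each $T^r$. The pair $\mathcal T=(F,s)$ is an information tree: orient each $T^r$ away from $s^r$ and add a root $0$ (the planner) with an arc $0\to s^r$ for each $r$. If $\theta=b$ no messages are sent. If $\theta=g$ the planner sends a message along each arc $0\to s^r$, and every agent who receives a message forwards it along every arc leaving her. Each transmission along an arc is lost independently with probability $\varepsilon$. Agent $i$ observes only $x_i\in\{y,n\}$ (received / not). $\Omega=\{g,b\}\times\{y,n\}^I$, $\mathbb P_{\mathcal T}$ the induced probability. $G=\{\theta=g\}$, $Y_i=\{x_i=y\}$, $N_i=\Omega\setminus Y_i$, $Y^*=\bigcap_iY_i$.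 $B^p_i(E)=\{\omega:\mathbb P_{\mathcal T}[E\mid x_i=x_i(\omega)]\ge p\}$, $B^p(E)=\bigcap_iB^p_i(E)$, $B^{p,0}(E)=E$, $B^{p,\ell}(E)=B^p(B^{p,\ell-1}(E))$, $C^p_{\mathcal T}(E)=\bigcap_{\ell\ge1}B^{p,\ell}(E)$. For any seed $1$, $\mathbb P_{\mathcal T}[G\mid N_1]=q_1$ and $\mathbb P_{\mathcal T}[Y^*\mid Y_1]=q_2$; $q_1$ is increasing and $q_2$ decreasing in $\varepsilon$. *)

theory Defs
  imports Complex_Main
begin

text \<open>Agents are 1..I, the planner is 0. An information tree (forest + seeding, oriented
away from the seeds, with root 0 attached to every seed) is encoded by its parent map:
par i is the tail of the unique arc entering agent i (par i = 0 iff i is a seed).\<close>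

definition is_info_tree :: "nat \<Rightarrow> (nat \<Rightarrow> nat) \<Rightarrow> bool" where
  "is_info_tree I par \<longleftrightarrow> par 0 = 0 \<and>
     (\<forall>i\<in>{1..I}. par i \<in> {0..I} \<and> (\<exists>n. (par ^^ n) i = 0))"

text \<open>States: (theta, x) with theta = True meaning g, x i = True meaning x_i = y.\<close>
definition Omega :: "nat \<Rightarrow> (bool \<times> (nat \<Rightarrow> bool)) set" where
  "Omega I = {(th, x). \<forall>i. i \<notin> {1..I} \<longrightarrow> \<not> x i}"

text \<open>Arc outcomes: a i = True iff the transmission along the arc entering i succeeds.\<close>
definition arcs :: "nat \<Rightarrow> (nat \<Rightarrow> bool) set" where
  "arcs I = {a. \<forall>i. i \<notin> {1..I} \<longrightarrow> \<not> a i}"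

definition arc_weight :: "nat \<Rightarrow> real \<Rightarrow> (nat \<Rightarrow> bool) \<Rightarrow> real" where
  "arc_weight I \<epsilon> a = (\<Prod>i\<in>{1..I}. if a i then 1 - \<epsilon> else \<epsilon>)"

definition recv :: "nat \<Rightarrow> (nat \<Rightarrow> nat) \<Rightarrow> (nat \<Rightarrow> bool) \<Rightarrow> nat \<Rightarrow> bool" where
  "recv I par a i \<longleftrightarrow> i \<in> {1..I} \<and> (\<forall>n. (par ^^ n) i \<noteq> 0 \<longrightarrow> a ((par ^^ n) i))"

definition Pr :: "nat \<Rightarrow> (nat \<Rightarrow> nat) \<Rightarrow> real \<Rightarrow> real \<Rightarrow> (bool \<times> (nat \<Rightarrow> bool)) set \<Rightarrow> real" where
  "Pr I par \<rho> \<epsilon> E =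
     \<rho> * (\<Sum>a\<in>arcs I. arc_weight I \<epsilon> a * (if (True, recv I par a) \<in> E then 1 else 0))
     + (1 - \<rho>) * (if (False, (\<lambda>_. False)) \<in> E then 1 else 0)"

definition cond_Pr :: "nat \<Rightarrow> (nat \<Rightarrow> nat) \<Rightarrow> real \<Rightarrow> real \<Rightarrow>
    (bool \<times> (nat \<Rightarrow> bool)) set \<Rightarrow> (bool \<times> (nat \<Rightarrow> bool)) set \<Rightarrow> real" where
  "cond_Pr I par \<rho> \<epsilon> E F = Pr I par \<rho> \<epsilon> (E \<inter> F) / Pr I par \<rho> \<epsilon> F"

definition info_cell :: "nat \<Rightarrow> nat \<Rightarrow> bool \<times> (nat \<Rightarrow> bool) \<Rightarrow> (bool \<times> (nat \<Rightarrow> bool)) set" where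
  "info_cell I i \<omega> = {\<omega>'\<in>Omega I. snd \<omega>' i = snd \<omega> i}"

definition belief_i :: "nat \<Rightarrow> (nat \<Rightarrow> nat) \<Rightarrow> real \<Rightarrow> real \<Rightarrow> real \<Rightarrow> nat \<Rightarrow>
    (bool \<times> (nat \<Rightarrow> bool)) set \<Rightarrow> (bool \<times> (nat \<Rightarrow> bool)) set" where
  "belief_i I par \<rho> \<epsilon> p i E = {\<omega>\<in>Omega I. cond_Pr I par \<rho> \<epsilon> E (info_cell I i \<omega>) \<ge> p}"

definition belief :: "nat \<Rightarrow> (nat \<Rightarrow> nat) \<Rightarrow> real \<Rightarrow> real \<Rightarrow> real \<Rightarrow>
    (bool \<times> (nat \<Rightarrow> bool)) set \<Rightarrow> (bool \<times> (nat \<Rightarrow> bool)) set" where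
  "belief I par \<rho> \<epsilon> p E = Omega I \<inter> (\<Inter>i\<in>{1..I}. belief_i I par \<rho> \<epsilon> p i E)"

definition common_belief :: "nat \<Rightarrow> (nat \<Rightarrow> nat) \<Rightarrow> real \<Rightarrow> real \<Rightarrow> real \<Rightarrow>
    (bool \<times> (nat \<Rightarrow> bool)) set \<Rightarrow> (bool \<times> (nat \<Rightarrow> bool)) set" where
  "common_belief I par \<rho> \<epsilon> p E = (\<Inter>l\<in>{1..}. (belief I par \<rho> \<epsilon> p ^^ l) E)"

definition Gev :: "nat \<Rightarrow> (bool \<times> (nat \<Rightarrow> bool)) set" where
  "Gev I = {\<omega>\<in>Omega I. fst \<omega>}"

definition Ystar :: "nat \<Rightarrow> (bool \<times> (nat \<Rightarrow> bool)) set" where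
  "Ystar I = {\<omega>\<in>Omega I. \<forall>i\<in>{1..I}. snd \<omega> i}"

definition q1 :: "real \<Rightarrow> real \<Rightarrow> real" where
  "q1 \<rho> \<epsilon> = \<rho> * \<epsilon> / (1 - \<rho> * (1 - \<epsilon>))"

definition q2 :: "nat \<Rightarrow> real \<Rightarrow> real" where
  "q2 I \<epsilon> = (1 - \<epsilon>) ^ (I - 1)"

end

theory Submission
  imports Defs
begin


definition S :: "nat \<Rightarrow> real \<Rightarrow> (nat\<Rightarrow>bool) set \<Rightarrow> real" where
  "S I \<epsilon> A = (\<Sum>a\<in>arcs I \<inter> A. arc_weight I \<epsilon> a)"

lemma arcs_eq: "arcs I = (\<lambda>X i. i \<in> X) ` Pow {1..I}"
proof
  show "arcs I \<subseteq> (\<lambda>X i. i \<in> X) ` Pow {1..I}"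
  proof
    fix a assume "a \<in> arcs I"
    hence "a = (\<lambda>i. i \<in> {i. a i})" "{i. a i} \<in> Pow {1..I}" by (auto simp: arcs_def)
    thus "a \<in> (\<lambda>X i. i \<in> X) ` Pow {1..I}" by blast
  qed
qed (auto simp: arcs_def)

lemma finite_arcs: "finite (arcs I)"
  by (simp add: arcs_eq)

lemma inj_arcs: "inj_on (\<lambda>X i. i \<in> X) (Pow {1..I})"
  by (rule inj_onI) (metis Collect_mem_eq)

definition a0 :: "nat \<Rightarrow> nat \<Rightarrow> bool" where "a0 J = (\<lambda>i. i \<in> {1..J})"

context fixes I :: nat and \<epsilon> :: real assumes e0: "0 < \<epsilon>" and e1: "\<epsilon> < 1"
begin

lemma w_nonneg: "arc_weight I \<epsilon> a \<ge> 0"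
  unfolding arc_weight_def using e0 e1 by (intro prod_nonneg) auto

lemma S_nonneg: "S I \<epsilon> A \<ge> 0"
  unfolding S_def by (intro sum_nonneg w_nonneg)

lemma S_mono: "A \<subseteq> B \<Longrightarrow> S I \<epsilon> A \<le> S I \<epsilon> B"
  unfolding S_def by (intro sum_mono2) (auto simp: finite_arcs w_nonneg)

lemma S_split: "S I \<epsilon> A = S I \<epsilon> (A \<inter> B) + S I \<epsilon> (A - B)"
proof -
  have "arcs I \<inter> A = (arcs I \<inter> (A \<inter> B)) \<union> (arcs I \<inter> (A - B))" by blast
  thus ?thesis unfolding S_def
    by (metis (no_types, lifting) Diff_disjoint Int_Diff finite_Int finite_arcs inf_assoc sum.union_disjoint inf_commute)
qed

lemma S_UNIV: "S I \<epsilon> UNIV = 1"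
proof -
  have "S I \<epsilon> UNIV = (\<Sum>X\<in>Pow {1..I}. arc_weight I \<epsilon> (\<lambda>i. i \<in> X))"
    unfolding S_def arcs_eq Int_UNIV_right by (subst sum.reindex[OF inj_arcs]) (simp add: comp_def)
  also have "\<dots> = (\<Sum>X\<in>Pow {1..I}. (\<Prod>x\<in>X. 1 - \<epsilon>) * (\<Prod>x\<in>{1..I}-X. \<epsilon>))"
  proof (rule sum.cong)
    fix X assume X: "X \<in> Pow {1..I}"
    have "arc_weight I \<epsilon> (\<lambda>i. i \<in> X) = (\<Prod>i\<in>{1..I}. if i \<in> X then 1 - \<epsilon> else \<epsilon>)"
      by (simp add: arc_weight_def)
    also have "\<dots> = (\<Prod>x\<in>{1..I} \<inter> {x. x \<in> X}. 1 - \<epsilon>) * (\<Prod>x\<in>{1..I} \<inter> - {x. x \<in> X}. \<epsilon>)"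
      by (rule prod.If_cases) simp
    also have "{1..I} \<inter> {x. x \<in> X} = X" using X by auto
    also have "{1..I} \<inter> - {x. x \<in> X} = {1..I} - X" by auto
    finally show "arc_weight I \<epsilon> (\<lambda>i. i \<in> X) = (\<Prod>x\<in>X. 1 - \<epsilon>) * (\<Prod>x\<in>{1..I}-X. \<epsilon>)" .
  qed simp
  also have "\<dots> = (\<Prod>x\<in>{1..I}. (1 - \<epsilon>) + \<epsilon>)"
    by (rule prod_add[symmetric]) simp
  finally show ?thesis by simp
qed

lemma S_indep:
  assumes j: "j \<in> {1..I}" and A: "\<And>a b. a(j:=b) \<in> A \<longleftrightarrow> a \<in> A"
  shows "S I \<epsilon> (A \<inter> {a. a j}) = (1 - \<epsilon>) * S I \<epsilon> A"
proof -
  define T where "T = S I \<epsilon> (A \<inter> {a. a j})"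
  define F where "F = S I \<epsilon> (A - {a. a j})"
  have TF: "S I \<epsilon> A = T + F" unfolding T_def F_def by (rule S_split)
  let ?f = "\<lambda>b. if b then 1 - \<epsilon> else \<epsilon>"
  have wsplit: "arc_weight I \<epsilon> a = ?f (a j) * (\<Prod>i\<in>{1..I}-{j}. ?f (a i))" for a
    unfolding arc_weight_def using j by (simp add: prod.remove)
  have key: "\<epsilon> * arc_weight I \<epsilon> a = (1 - \<epsilon>) * arc_weight I \<epsilon> (a(j:=False))" if "a j" for a
  proof -
    have "(\<Prod>i\<in>{1..I}-{j}. ?f ((a(j:=False)) i)) = (\<Prod>i\<in>{1..I}-{j}. ?f (a i))"
      by (rule prod.cong) auto
    thus ?thesis using wsplit[of a] wsplit[of "a(j:=False)"] that by simp
  qed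
  have "\<epsilon> * T = (\<Sum>a\<in>arcs I \<inter> (A \<inter> {a. a j}). (1 - \<epsilon>) * arc_weight I \<epsilon> (a(j:=False)))"
    unfolding T_def S_def sum_distrib_left by (rule sum.cong) (auto simp: key)
  also have "\<dots> = (\<Sum>a\<in>arcs I \<inter> (A - {a. a j}). (1 - \<epsilon>) * arc_weight I \<epsilon> a)"
  proof (rule sum.reindex_bij_witness[where i = "\<lambda>a. a(j:=True)" and j = "\<lambda>a. a(j:=False)"])
    fix a assume a: "a \<in> arcs I \<inter> (A - {a. a j})"
    show "(a(j:=True))(j:=False) = a" using a by (auto simp: fun_eq_iff)
    show "a(j:=True) \<in> arcs I \<inter> (A \<inter> {a. a j})"
      using a j A[of a True] by (auto simp: arcs_def)
  next
    fix a assume a: "a \<in> arcs I \<inter> (A \<inter> {a. a j})"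
    show "(a(j:=False))(j:=True) = a" using a by (auto simp: fun_eq_iff)
    show "a(j:=False) \<in> arcs I \<inter> (A - {a. a j})"
      using a j A[of a False] by (auto simp: arcs_def)
    show "(1 - \<epsilon>) * arc_weight I \<epsilon> (a(j:=False)) = (1 - \<epsilon>) * arc_weight I \<epsilon> (a(j:=False))" ..
  qed
  also have "\<dots> = (1 - \<epsilon>) * F" unfolding F_def S_def sum_distrib_left ..
  finally have "\<epsilon> * T = (1 - \<epsilon>) * F" .
  thus ?thesis unfolding T_def[symmetric] TF by (simp add: algebra_simps)
qed

lemma S_coord: "j \<in> {1..I} \<Longrightarrow> S I \<epsilon> {a. a j} = 1 - \<epsilon>"
  using S_indep[of j UNIV] S_UNIV by simp


lemma a0_arcs: "a0 I \<in> arcs I" by (simp add: a0_def arcs_def)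

lemma w_a0: "arc_weight I \<epsilon> (a0 I) = (1 - \<epsilon>) ^ I"
  by (simp add: a0_def arc_weight_def)

lemma S_ge_a0: "a0 I \<in> A \<Longrightarrow> S I \<epsilon> A \<ge> (1 - \<epsilon>) ^ I"
  unfolding S_def w_a0[symmetric]
  by (rule member_le_sum) (auto simp: a0_arcs w_nonneg finite_arcs)

lemma S_le_a0: assumes "arcs I \<inter> A \<subseteq> {a0 I}" shows "S I \<epsilon> A \<le> (1 - \<epsilon>) ^ I"
proof -
  have "S I \<epsilon> A \<le> (\<Sum>a\<in>{a0 I}. arc_weight I \<epsilon> a)"
    unfolding S_def by (rule sum_mono2) (use assms in \<open>auto simp: w_nonneg\<close>)
  thus ?thesis by (simp add: w_a0)
qed

end


lemma L1: fixes \<rho> \<epsilon> u :: real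
  assumes "0<\<rho>" "\<rho><1" "0<\<epsilon>" "\<epsilon>\<le>u" "u\<le>1"
  shows "\<rho>*\<epsilon>/(1-\<rho>*(1-\<epsilon>)) \<le> \<rho>*u/(\<rho>*u + (1-\<rho>))"
proof -
  have d1: "1-\<rho>*(1-\<epsilon>) > 0" using assms by (smt (verit) mult_less_cancel_left2)
  have d2: "\<rho>*u + (1-\<rho>) > 0" using assms by (smt (verit) mult_pos_pos)
  have "\<rho>*\<epsilon>*(\<rho>*u + (1-\<rho>)) \<le> \<rho>*u*(1-\<rho>*(1-\<epsilon>))"
  proof -
    have "\<rho>*u*(1-\<rho>*(1-\<epsilon>)) - \<rho>*\<epsilon>*(\<rho>*u + (1-\<rho>)) = \<rho>*(1-\<rho>)*(u-\<epsilon>)"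
      by (simp add: algebra_simps)
    moreover have "\<rho>*(1-\<rho>)*(u-\<epsilon>) \<ge> 0" using assms by simp
    ultimately show ?thesis by linarith
  qed
  thus ?thesis using d1 d2 by (simp add: divide_simps)
qed

lemma L2: fixes \<rho> \<epsilon> r x :: real
  assumes "0<\<rho>" "\<rho><1" "0<\<epsilon>" "\<epsilon><1" "0\<le>r" "r\<le>1" "x\<le>\<rho>*r*\<epsilon>"
  shows "x/(\<rho>*(1-(1-\<epsilon>)*r) + (1-\<rho>)) \<le> \<rho>*\<epsilon>/(1-\<rho>*(1-\<epsilon>))"
proof -
  have d1: "1-\<rho>*(1-\<epsilon>) > 0" using assms by (smt (verit) mult_less_cancel_left2)
  have "(1-\<epsilon>)*r \<le> 1" using assms by (smt (verit) mult_le_one)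
  hence "\<rho>*(1-(1-\<epsilon>)*r) \<ge> 0" using assms by simp
  hence d2: "\<rho>*(1-(1-\<epsilon>)*r) + (1-\<rho>) > 0" using assms by linarith
  have "\<rho>*r*\<epsilon>*(1-\<rho>*(1-\<epsilon>)) \<le> \<rho>*\<epsilon>*(\<rho>*(1-(1-\<epsilon>)*r) + (1-\<rho>))"
  proof -
    have "\<rho>*\<epsilon>*(\<rho>*(1-(1-\<epsilon>)*r) + (1-\<rho>)) - \<rho>*r*\<epsilon>*(1-\<rho>*(1-\<epsilon>)) = \<rho>*\<epsilon>*(1-r)"
      by (simp add: algebra_simps)
    moreover have "\<rho>*\<epsilon>*(1-r) \<ge> 0" using assms by simp
    ultimately show ?thesis by linarith
  qed
  moreover have "x*(1-\<rho>*(1-\<epsilon>)) \<le> \<rho>*r*\<epsilon>*(1-\<rho>*(1-\<epsilon>))"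
    using assms d1 by (intro mult_right_mono) auto
  ultimately have "x*(1-\<rho>*(1-\<epsilon>)) \<le> \<rho>*\<epsilon>*(\<rho>*(1-(1-\<epsilon>)*r) + (1-\<rho>))" by linarith
  thus ?thesis using d1 d2 by (simp add: divide_simps)
qed

lemma L3: fixes \<rho> \<epsilon> r s :: real and I :: nat
  assumes "0<\<rho>" "0<r" "r\<le>1-\<epsilon>" "s\<ge>(1-\<epsilon>)^I" "I\<ge>1" "\<epsilon><1"
  shows "\<rho>*s/(\<rho>*r) \<ge> (1-\<epsilon>)^(I-1)"
proof -
  have "(1-\<epsilon>)^I = (1-\<epsilon>)*(1-\<epsilon>)^(I-1)" using assms by (metis Suc_diff_le diff_Suc_1 power_Suc)
  also have "\<dots> \<ge> r*(1-\<epsilon>)^(I-1)" using assms by (intro mult_right_mono) auto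
  finally have "s \<ge> r*(1-\<epsilon>)^(I-1)" using assms by linarith
  thus ?thesis using assms by (simp add: divide_simps mult.commute)
qed

lemma L4: fixes \<rho> \<epsilon> r s :: real and I :: nat
  assumes "0<\<rho>" "r=1-\<epsilon>" "s\<le>(1-\<epsilon>)^I" "I\<ge>1" "\<epsilon><1"
  shows "\<rho>*s/(\<rho>*r) \<le> (1-\<epsilon>)^(I-1)"
proof -
  have "(1-\<epsilon>)^I = (1-\<epsilon>)*(1-\<epsilon>)^(I-1)" using assms by (metis Suc_diff_le diff_Suc_1 power_Suc)
  hence "s \<le> r*(1-\<epsilon>)^(I-1)" using assms by simp
  thus ?thesis using assms by (simp add: divide_simps mult.commute)
qed

lemma L5: fixes \<rho> e e' :: real
  assumes "0<\<rho>" "\<rho><1" "0<e" "e<e'" "e'<1"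
  shows "q1 \<rho> e < q1 \<rho> e'"
proof -
  have d1: "1-\<rho>*(1-e) > 0" using assms by (smt (verit) mult_less_cancel_left2)
  have d2: "1-\<rho>*(1-e') > 0" using assms by (smt (verit) mult_less_cancel_left2)
  have "\<rho>*e'*(1-\<rho>*(1-e)) - \<rho>*e*(1-\<rho>*(1-e')) = \<rho>*(1-\<rho>)*(e'-e)"
    by (simp add: algebra_simps)
  moreover have "\<rho>*(1-\<rho>)*(e'-e) > 0" using assms by simp
  ultimately have "\<rho>*e*(1-\<rho>*(1-e')) < \<rho>*e'*(1-\<rho>*(1-e))" by linarith
  thus ?thesis using d1 d2 unfolding q1_def by (simp add: divide_simps)
qed

lemma L6: fixes e e' :: real assumes "0<e" "e<e'" "e'<1" shows "q2 I e' \<le> q2 I e"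
  unfolding q2_def using assms by (intro power_mono) auto



context fixes I :: nat and par :: "nat \<Rightarrow> nat" assumes tree: "is_info_tree I par"
begin

lemma par0: "par 0 = 0" using tree by (simp add: is_info_tree_def)

lemma iter_zero: "(par^^n) 0 = 0"
  by (induction n) (auto simp: par0)

lemma iter_range: "i \<in> {0..I} \<Longrightarrow> (par^^n) i \<in> {0..I}"
proof (induction n)
  case (Suc n)
  show ?case
  proof (cases "(par^^n) i = 0")
    case True thus ?thesis by (simp add: par0)
  next
    case False
    hence "(par^^n) i \<in> {1..I}" using Suc by auto
    thus ?thesis using tree by (auto simp: is_info_tree_def)
  qed
qed simp

lemma iter_stay: "(par^^m) j = 0 \<Longrightarrow> m \<le> N \<Longrightarrow> (par^^N) j = 0"
proof -
  assume "(par^^m) j = 0" "m \<le> N"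
  then have "(par^^N) j = (par^^(N-m)) ((par^^m) j)"
    by (metis funpow_add le_add_diff_inverse2 o_apply)
  thus ?thesis using \<open>(par^^m) j = 0\<close> iter_zero by simp
qed

lemma reaches: "j \<in> {1..I} \<Longrightarrow> \<exists>n. (par^^n) j = 0"
  using tree by (auto simp: is_info_tree_def)

lemma recv_outside: "k \<notin> {1..I} \<Longrightarrow> \<not> recv I par a k"
  unfolding recv_def by blast

lemma recv_coord: "recv I par a k \<Longrightarrow> a k"
  unfolding recv_def by (metis atLeastAtMost_iff funpow_0 not_one_le_zero)

lemma recv_a0: "k \<in> {1..I} \<Longrightarrow> recv I par (a0 I) k"
proof -
  assume k: "k \<in> {1..I}"
  have "(par^^n) k \<noteq> 0 \<longrightarrow> (par^^n) k \<in> {1..I}" for n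
    using iter_range[of k n] k by auto
  thus ?thesis unfolding recv_def using k by (auto simp: a0_def)
qed

lemma recv_seed: "j \<in> {1..I} \<Longrightarrow> par j = 0 \<Longrightarrow> recv I par a j \<longleftrightarrow> a j"
proof -
  assume j: "j \<in> {1..I}" "par j = 0"
  have "(par^^Suc n) j = 0" for n by (simp add: funpow_Suc_right iter_zero j(2) del: funpow.simps)
  hence "(par^^n) j \<noteq> 0 \<longleftrightarrow> n = 0" for n using j by (cases n) auto
  thus ?thesis using j unfolding recv_def by auto
qed

lemma recv_child:
  assumes j: "j \<in> {1..I}" and i: "par j = i" "i \<noteq> 0"
  shows "i \<in> {1..I}" and "recv I par a j \<longleftrightarrow> recv I par a i \<and> a j"
proof -
  show ii: "i \<in> {1..I}" using tree j i by (auto simp: is_info_tree_def)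
  have s: "(par^^Suc n) j = (par^^n) i" for n by (simp add: funpow_Suc_right i(1) del: funpow.simps)
  have "(\<forall>n. (par^^n) j \<noteq> 0 \<longrightarrow> a ((par^^n) j)) \<longleftrightarrow>
        a j \<and> (\<forall>n. (par^^Suc n) j \<noteq> 0 \<longrightarrow> a ((par^^Suc n) j))"
    using j by (metis funpow_0 not0_implies_Suc atLeastAtMost_iff not_one_le_zero)
  thus "recv I par a j \<longleftrightarrow> recv I par a i \<and> a j"
    unfolding recv_def s using j ii by auto
qed

lemma not_ancestor:
  assumes j: "j \<in> {1..I}" and i: "par j = i"
  shows "(par^^n) i \<noteq> j"
proof
  assume h: "(par^^n) i = j"
  have cyc: "(par^^Suc n) j = j" by (simp add: funpow_Suc_right i h del: funpow.simps)
  have "(par^^(k * Suc n)) j = j" for k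
  proof (induction k)
    case (Suc k)
    have e: "Suc k * Suc n = Suc n + k * Suc n" by simp
    have "(par^^(Suc k * Suc n)) j = (par^^(Suc n)) ((par^^(k * Suc n)) j)"
      unfolding e funpow_add by simp
    thus ?case using Suc cyc by simp
  qed simp
  moreover obtain m where m: "(par^^m) j = 0" using reaches j by blast
  moreover have "m \<le> m * Suc n" by simp
  ultimately have "j = 0" using iter_stay by metis
  thus False using j by simp
qed

lemma recv_indep:
  assumes j: "j \<in> {1..I}" and i: "par j = i"
  shows "recv I par (a(j:=b)) i \<longleftrightarrow> recv I par a i"
  unfolding recv_def using not_ancestor[OF j i] by auto

lemma seed_exists: assumes "I \<ge> 1" shows "\<exists>s\<in>{1..I}. par s = 0"
proof -
  obtain n where n: "(par^^n) 1 = 0" using reaches assms by auto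
  define m where "m = (LEAST n. (par^^n) 1 = 0)"
  have m: "(par^^m) 1 = 0" unfolding m_def by (rule LeastI) (rule n)
  have "m \<noteq> 0" using m by (metis funpow_0 one_neq_zero)
  then obtain k where k: "m = Suc k" by (cases m) auto
  have "k < m" using k by simp
  hence "(par^^k) 1 \<noteq> 0" unfolding m_def by (rule not_less_Least)
  moreover have "(par^^k) 1 \<in> {0..I}" using iter_range assms by auto
  moreover have "par ((par^^k) 1) = 0" using m k by simp
  ultimately show ?thesis by auto
qed

end


definition YY :: "nat \<Rightarrow> nat \<Rightarrow> (bool \<times> (nat \<Rightarrow> bool)) set" where
  "YY I j = {\<omega>\<in>Omega I. snd \<omega> j}"
definition NN :: "nat \<Rightarrow> nat \<Rightarrow> (bool \<times> (nat \<Rightarrow> bool)) set" where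
  "NN I j = {\<omega>\<in>Omega I. \<not> snd \<omega> j}"

lemma info_cell_eq: "info_cell I j \<omega> = (if snd \<omega> j then YY I j else NN I j)"
  by (auto simp: info_cell_def YY_def NN_def)

context fixes I :: nat and par :: "nat \<Rightarrow> nat" and \<rho> \<epsilon> p :: real
  assumes tree: "is_info_tree I par" and I1: "I \<ge> 1"
    and r0: "0 < \<rho>" and r1: "\<rho> < 1" and e0: "0 < \<epsilon>" and e1: "\<epsilon> < 1"
begin

lemmas SM = S_mono[where I=I and \<epsilon>=\<epsilon>, OF e0 e1]
lemmas SN = S_nonneg[where I=I and \<epsilon>=\<epsilon>, OF e0 e1]
lemmas SSp = S_split[where I=I and \<epsilon>=\<epsilon>, OF e0 e1]
lemmas SU = S_UNIV[where I=I and \<epsilon>=\<epsilon>, OF e0 e1]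
lemmas SI = S_indep[where I=I and \<epsilon>=\<epsilon>, OF e0 e1]
lemmas SC = S_coord[where I=I and \<epsilon>=\<epsilon>, OF e0 e1]
lemmas SGE = S_ge_a0[where I=I and \<epsilon>=\<epsilon>, OF e0 e1]
lemmas SLE = S_le_a0[where I=I and \<epsilon>=\<epsilon>, OF e0 e1]

abbreviation "PR \<equiv> Pr I par \<rho> \<epsilon>"
abbreviation "SS \<equiv> S I \<epsilon>"
abbreviation "rr j \<equiv> S I \<epsilon> {a. recv I par a j}"
abbreviation "Bel \<equiv> belief I par \<rho> \<epsilon> p"

lemma Pr_eq: "PR E = \<rho> * SS {a. (True, recv I par a) \<in> E}
   + (1-\<rho>) * (if (False, \<lambda>_. False) \<in> E then 1 else 0)"
proof -
  have "(\<Sum>a\<in>arcs I. arc_weight I \<epsilon> a * (if (True, recv I par a) \<in> E then 1 else 0))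
      = (\<Sum>a\<in>arcs I. if a \<in> {a. (True, recv I par a) \<in> E} then arc_weight I \<epsilon> a else 0)"
    by (rule sum.cong) auto
  also have "\<dots> = SS {a. (True, recv I par a) \<in> E}"
    unfolding S_def by (rule sum.inter_restrict[OF finite_arcs, symmetric])
  finally show ?thesis unfolding Pr_def by simp
qed

lemma T_Omega: "(True, recv I par a) \<in> Omega I"
  using recv_outside[OF tree] by (auto simp: Omega_def)

lemma F_Omega: "(False, \<lambda>_. False) \<in> Omega I"
  by (auto simp: Omega_def)

lemma Pr_mono: "E \<subseteq> F \<Longrightarrow> PR E \<le> PR F"
proof -
  assume EF: "E \<subseteq> F"
  have "{a. (True, recv I par a) \<in> E} \<subseteq> {a. (True, recv I par a) \<in> F}" using EF by auto
  hence "SS {a. (True, recv I par a) \<in> E} \<le> SS {a. (True, recv I par a) \<in> F}" by (rule SM)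
  hence "\<rho> * SS {a. (True, recv I par a) \<in> E} \<le> \<rho> * SS {a. (True, recv I par a) \<in> F}"
    using r0 by simp
  moreover have "(if (False, \<lambda>_. False) \<in> E then 1 else 0) \<le> (if (False, \<lambda>_. False) \<in> F then (1::real) else 0)"
    using EF by auto
  hence "(1-\<rho>) * (if (False, \<lambda>_. False) \<in> E then 1 else 0) \<le> (1-\<rho>) * (if (False, \<lambda>_. False) \<in> F then (1::real) else 0)"
    using r1 by (intro mult_left_mono) auto
  ultimately show ?thesis unfolding Pr_eq by linarith
qed

lemma Pr_nonneg: "PR E \<ge> 0"
  unfolding Pr_eq using SN r0 r1 by (auto intro!: add_nonneg_nonneg)

lemma Pr_empty: "PR {} = 0"
  unfolding Pr_eq by (simp add: S_def)

lemma S_compl: "SS (- A) = 1 - SS A"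
  using SSp[of UNIV A] SU by (simp add: Compl_eq_Diff_UNIV)

lemma Pr_YY: "j \<in> {1..I} \<Longrightarrow> PR (YY I j) = \<rho> * rr j"
  unfolding Pr_eq YY_def using T_Omega by auto

lemma Pr_GY: "j \<in> {1..I} \<Longrightarrow> PR (Gev I \<inter> YY I j) = \<rho> * rr j"
  unfolding Pr_eq YY_def Gev_def using T_Omega by auto

lemma Pr_NN: "j \<in> {1..I} \<Longrightarrow> PR (NN I j) = \<rho> * (1 - rr j) + (1 - \<rho>)"
proof -
  have eq: "{a. (True, recv I par a) \<in> NN I j} = - {a. recv I par a j}"
    unfolding NN_def using T_Omega by auto
  show ?thesis unfolding Pr_eq eq S_compl using F_Omega by (simp add: NN_def)
qed

lemma Pr_GN: "j \<in> {1..I} \<Longrightarrow> PR (Gev I \<inter> NN I j) = \<rho> * (1 - rr j)"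
proof -
  have eq: "{a. (True, recv I par a) \<in> Gev I \<inter> NN I j} = - {a. recv I par a j}"
    unfolding NN_def Gev_def using T_Omega by auto
  show ?thesis unfolding Pr_eq eq S_compl by (simp add: NN_def Gev_def)
qed

abbreviation "ss \<equiv> S I \<epsilon> {a. \<forall>k\<in>{1..I}. recv I par a k}"

lemma Pr_Ystar: "PR (Ystar I) = \<rho> * ss"
proof -
  have "{a. (True, recv I par a) \<in> Ystar I} = {a. \<forall>k\<in>{1..I}. recv I par a k}"
    unfolding Ystar_def using T_Omega by auto
  moreover have "(False, \<lambda>_. False) \<notin> Ystar I" using I1 by (auto simp: Ystar_def)
  ultimately show ?thesis unfolding Pr_eq by simp
qed

lemma ss_ge: "ss \<ge> (1-\<epsilon>)^I"
  using recv_a0[OF tree] by (intro SGE) auto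

lemma ss_le: "ss \<le> (1-\<epsilon>)^I"
proof (rule SLE)
  show "arcs I \<inter> {a. \<forall>k\<in>{1..I}. recv I par a k} \<subseteq> {a0 I}"
  proof
    fix a assume a: "a \<in> arcs I \<inter> {a. \<forall>k\<in>{1..I}. recv I par a k}"
    have "a x = a0 I x" for x
    proof (cases "x \<in> {1..I}")
      case True thus ?thesis using a recv_coord[OF tree, of a x] by (simp add: a0_def)
    next
      case False thus ?thesis using a by (simp add: a0_def arcs_def)
    qed
    hence "a = a0 I" by auto
    thus "a \<in> {a0 I}" by simp
  qed
qed

lemma rr_ge: "j \<in> {1..I} \<Longrightarrow> rr j \<ge> (1-\<epsilon>)^I"
  using recv_a0[OF tree] by (intro SGE) auto

lemma rr_pos: "j \<in> {1..I} \<Longrightarrow> rr j > 0"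
  using rr_ge[of j] e1 by (smt (verit) zero_less_power)

lemma rr_le: "j \<in> {1..I} \<Longrightarrow> rr j \<le> 1 - \<epsilon>"
  using SM[of "{a. recv I par a j}" "{a. a j}"] SC[of j] recv_coord[OF tree]
  by auto

lemma rr_seed: "j \<in> {1..I} \<Longrightarrow> par j = 0 \<Longrightarrow> rr j = 1 - \<epsilon>"
  using recv_seed[OF tree] SC[of j] by simp

lemma rr_child:
  assumes j: "j \<in> {1..I}" and i: "par j = i" "i \<noteq> 0"
  shows "rr j = (1-\<epsilon>) * rr i" and "SS {a. recv I par a i \<and> \<not> recv I par a j} = \<epsilon> * rr i"
proof -
  have eq: "{a. recv I par a j} = {a. recv I par a i} \<inter> {a. a j}"
    using recv_child(2)[OF tree j i] by auto
  show 1: "rr j = (1-\<epsilon>) * rr i" unfolding eq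
    by (rule SI[OF j]) (use recv_indep[OF tree j i(1)] in auto)
  have eq2: "{a. recv I par a i \<and> \<not> recv I par a j} = {a. recv I par a i} - {a. a j}"
    using recv_child(2)[OF tree j i] by auto
  have "rr i = rr j + SS {a. recv I par a i \<and> \<not> recv I par a j}"
    unfolding eq eq2 by (rule SSp)
  thus "SS {a. recv I par a i \<and> \<not> recv I par a j} = \<epsilon> * rr i" using 1 by (simp add: algebra_simps)
qed

lemma belief_Omega: "Bel D \<subseteq> Omega I"
  unfolding belief_def by auto

lemma belief_sub:
  assumes "j \<in> {1..I}" "cond_Pr I par \<rho> \<epsilon> D (NN I j) < p"
  shows "Bel D \<subseteq> YY I j"
proof
  fix \<omega> assume w: "\<omega> \<in> Bel D"
  hence "\<omega> \<in> Omega I" "p \<le> cond_Pr I par \<rho> \<epsilon> D (info_cell I j \<omega>)"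
    using assms(1) unfolding belief_def belief_i_def by auto
  thus "\<omega> \<in> YY I j" using assms(2) unfolding info_cell_eq by (auto simp: YY_def split: if_splits)
qed

lemma belief_mono: "D \<subseteq> D' \<Longrightarrow> Bel D \<subseteq> Bel D'"
proof -
  assume DD: "D \<subseteq> D'"
  have "cond_Pr I par \<rho> \<epsilon> D F \<le> cond_Pr I par \<rho> \<epsilon> D' F" for F
    unfolding cond_Pr_def using DD Pr_nonneg
    by (intro divide_right_mono Pr_mono) auto
  thus ?thesis unfolding belief_def belief_i_def by (auto intro: order_trans)
qed

lemma belief_ge:
  assumes "X \<subseteq> Omega I" "\<And>\<omega> j. \<omega> \<in> X \<Longrightarrow> j \<in> {1..I} \<Longrightarrow> p \<le> cond_Pr I par \<rho> \<epsilon> D (info_cell I j \<omega>)"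
  shows "X \<subseteq> Bel D"
  using assms unfolding belief_def belief_i_def by auto


lemma d_pos: "1 - \<rho>*(1-\<epsilon>) > 0"
  using r0 r1 e0 e1 by (smt (verit) mult_less_cancel_left2)

lemma q1_pos: "q1 \<rho> \<epsilon> > 0"
  unfolding q1_def using d_pos r0 e0 by simp

lemma q2_pos: "q2 I \<epsilon> > 0"
  unfolding q2_def using e1 by simp

lemma q2_le1: "q2 I \<epsilon> \<le> 1"
  unfolding q2_def using e0 e1 by (simp add: power_le_one)

lemma q1_lt1: "q1 \<rho> \<epsilon> < 1"
proof -
  have "\<rho>*\<epsilon> < 1 - \<rho>*(1-\<epsilon>)" using r1 by (simp add: algebra_simps)
  thus ?thesis unfolding q1_def using d_pos by simp
qed

lemma cond_GY: assumes j: "j \<in> {1..I}" shows "cond_Pr I par \<rho> \<epsilon> (Gev I) (YY I j) = 1"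
  unfolding cond_Pr_def Pr_GY[OF j] Pr_YY[OF j] using rr_pos[OF j] r0 by simp

lemma cond_GN_ge: "j \<in> {1..I} \<Longrightarrow> cond_Pr I par \<rho> \<epsilon> (Gev I) (NN I j) \<ge> q1 \<rho> \<epsilon>"
  unfolding cond_Pr_def Pr_GN Pr_NN q1_def
  using L1[OF r0 r1 e0, of "1 - rr j"] rr_le[of j] rr_pos[of j] by simp

lemma cond_GN_seed: assumes j: "j \<in> {1..I}" and s: "par j = 0"
  shows "cond_Pr I par \<rho> \<epsilon> (Gev I) (NN I j) = q1 \<rho> \<epsilon>"
  unfolding cond_Pr_def Pr_GN[OF j] Pr_NN[OF j] rr_seed[OF j s] q1_def by (simp add: algebra_simps)

lemma Pr_NN_pos: "j \<in> {1..I} \<Longrightarrow> PR (NN I j) > 0"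
  unfolding Pr_NN using rr_le[of j] r0 r1 e0 by (smt (verit) mult_nonneg_nonneg)

lemma cond_Omega: "j \<in> {1..I} \<Longrightarrow> cond_Pr I par \<rho> \<epsilon> (Omega I) (info_cell I j \<omega>) = 1"
proof -
  assume j: "j \<in> {1..I}"
  have "Omega I \<inter> info_cell I j \<omega> = info_cell I j \<omega>" by (auto simp: info_cell_def)
  moreover have "PR (info_cell I j \<omega>) > 0"
    unfolding info_cell_eq using Pr_YY[OF j] rr_pos[OF j] r0 Pr_NN_pos[OF j] by auto
  ultimately show ?thesis unfolding cond_Pr_def by simp
qed

lemma case1: assumes "p \<le> q1 \<rho> \<epsilon>" shows "common_belief I par \<rho> \<epsilon> p (Gev I) = Omega I"
proof -
  have B1: "Bel (Gev I) = Omega I"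
  proof
    show "Omega I \<subseteq> Bel (Gev I)"
    proof (rule belief_ge)
      fix \<omega> j assume j: "j \<in> {1..I}"
      show "p \<le> cond_Pr I par \<rho> \<epsilon> (Gev I) (info_cell I j \<omega>)"
        unfolding info_cell_eq using cond_GY[OF j] cond_GN_ge[OF j] assms q1_lt1 by auto
    qed simp
  qed (rule belief_Omega)
  have BO: "Bel (Omega I) = Omega I"
  proof
    show "Omega I \<subseteq> Bel (Omega I)"
      by (rule belief_ge) (use cond_Omega assms q1_lt1 in auto)
  qed (rule belief_Omega)
  have D: "(Bel^^Suc l) (Gev I) = Omega I" for l
    by (induction l) (simp_all add: B1 BO)
  show ?thesis unfolding common_belief_def
  proof
    show "(\<Inter>l\<in>{1..}. (Bel ^^ l) (Gev I)) \<subseteq> Omega I" using D[of 0] by auto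
    show "Omega I \<subseteq> (\<Inter>l\<in>{1..}. (Bel ^^ l) (Gev I))"
    proof
      fix \<omega> assume "\<omega> \<in> Omega I"
      moreover have "l \<in> {1..} \<Longrightarrow> (Bel ^^ l) (Gev I) = Omega I" for l
        using D[of "l - 1"] by (metis Suc_diff_1 atLeast_iff less_eq_Suc_le Suc_le_eq One_nat_def le_eq_less_or_eq zero_less_one)
      ultimately show "\<omega> \<in> (\<Inter>l\<in>{1..}. (Bel ^^ l) (Gev I))" by auto
    qed
  qed
qed

lemma Pr_YN: "i \<in> {1..I} \<Longrightarrow> j \<in> {1..I} \<Longrightarrow>
   PR (YY I i \<inter> NN I j) = \<rho> * SS {a. recv I par a i \<and> \<not> recv I par a j}"
proof -
  assume i: "i \<in> {1..I}"
  have eq: "{a. (True, recv I par a) \<in> YY I i \<inter> NN I j} = {a. recv I par a i \<and> \<not> recv I par a j}"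
    unfolding YY_def NN_def using T_Omega by auto
  have "(False, \<lambda>_. False) \<notin> YY I i \<inter> NN I j" by (simp add: YY_def)
  thus ?thesis unfolding Pr_eq eq by (simp add: YY_def)
qed

lemma key: assumes p: "q1 \<rho> \<epsilon> < p"
  shows "\<forall>j\<in>{1..I}. (par^^n) j = 0 \<longrightarrow> (\<forall>l. n \<le> l \<longrightarrow> 1 \<le> l \<longrightarrow> (Bel^^l) (Gev I) \<subseteq> YY I j)"
proof (induction n)
  case 0 thus ?case by auto
next
  case (Suc m)
  show ?case
  proof (intro ballI impI allI)
    fix j l assume j: "j \<in> {1..I}" and h: "(par^^Suc m) j = 0" and l: "Suc m \<le> l" "1 \<le> l"
    define i where "i = par j"
    have hm: "(par^^m) i = 0" using h unfolding i_def by (simp add: funpow_Suc_right del: funpow.simps)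
    obtain l' where l': "l = Suc l'" using l by (cases l) auto
    show "(Bel^^l) (Gev I) \<subseteq> YY I j"
    proof (cases "i = 0")
      case True
      have "(Bel^^Suc k) (Gev I) \<subseteq> YY I j" for k
      proof (induction k)
        case 0
        show ?case using belief_sub[OF j] cond_GN_seed[OF j] True p unfolding i_def by simp
      next
        case (Suc k)
        have "(Bel^^Suc k) (Gev I) \<inter> NN I j = {}" using Suc by (auto simp: YY_def NN_def)
        hence "cond_Pr I par \<rho> \<epsilon> ((Bel^^Suc k) (Gev I)) (NN I j) = 0"
          by (simp add: cond_Pr_def Pr_empty)
        hence "Bel ((Bel^^Suc k) (Gev I)) \<subseteq> YY I j" using belief_sub[OF j] p q1_pos by simp
        thus ?case by simp
      qed
      thus ?thesis using l' by simp
    next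
      case False
      have ii: "i \<in> {1..I}" using recv_child(1)[OF tree j i_def[symmetric] False] .
      have "l' \<noteq> 0" using hm False l l' by (cases m) auto
      hence D: "(Bel^^l') (Gev I) \<subseteq> YY I i" using Suc.IH ii hm l l' by auto
      let ?D = "(Bel^^l') (Gev I)"
      have x: "PR (?D \<inter> NN I j) \<le> \<rho> * rr i * \<epsilon>"
      proof -
        have "PR (?D \<inter> NN I j) \<le> PR (YY I i \<inter> NN I j)" using D by (intro Pr_mono) auto
        also have "\<dots> = \<rho> * (\<epsilon> * rr i)" using Pr_YN[OF ii j] rr_child(2)[OF j i_def[symmetric] False] by simp
        finally show ?thesis by (simp add: algebra_simps)
      qed
      have "cond_Pr I par \<rho> \<epsilon> ?D (NN I j) \<le> q1 \<rho> \<epsilon>"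
        unfolding cond_Pr_def Pr_NN[OF j] rr_child(1)[OF j i_def[symmetric] False] q1_def
        using L2[OF r0 r1 e0 e1 _ _ x] SN rr_le[OF ii] e0
        by (simp add: mult.commute)
      hence "Bel ?D \<subseteq> YY I j" using belief_sub[OF j] p by simp
      thus ?thesis using l' by simp
    qed
  qed
qed

lemma Ystar_Omega: "Ystar I \<subseteq> Omega I" by (auto simp: Ystar_def)

lemma cond_YsY: assumes j: "j \<in> {1..I}"
  shows "cond_Pr I par \<rho> \<epsilon> (Ystar I) (YY I j) = \<rho> * ss / (\<rho> * rr j)"
proof -
  have eq: "Ystar I \<inter> YY I j = Ystar I" using j by (auto simp: Ystar_def YY_def)
  show ?thesis unfolding cond_Pr_def eq Pr_YY[OF j] Pr_Ystar ..
qed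

lemma cond_YsN: assumes j: "j \<in> {1..I}"
  shows "cond_Pr I par \<rho> \<epsilon> (Ystar I) (NN I j) = 0"
proof -
  have "Ystar I \<inter> NN I j = {}" using j by (auto simp: Ystar_def NN_def)
  thus ?thesis unfolding cond_Pr_def by (simp add: Pr_empty)
qed

lemma common_sub_Ystar: assumes p: "q1 \<rho> \<epsilon> < p"
  shows "common_belief I par \<rho> \<epsilon> p (Gev I) \<subseteq> Ystar I"
proof
  fix \<omega> assume w: "\<omega> \<in> common_belief I par \<rho> \<epsilon> p (Gev I)"
  hence wl: "\<And>l. 1 \<le> l \<Longrightarrow> \<omega> \<in> (Bel^^l) (Gev I)" unfolding common_belief_def by auto
  have "\<omega> \<in> Omega I" using wl[of 1] belief_Omega by auto
  moreover have "snd \<omega> j" if j: "j \<in> {1..I}" for j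
  proof -
    obtain n where n: "(par^^n) j = 0" using reaches[OF tree j] by blast
    have "(Bel^^(max n 1)) (Gev I) \<subseteq> YY I j" using key[OF p, of n] j n by auto
    thus ?thesis using wl[of "max n 1"] by (auto simp: YY_def)
  qed
  ultimately show "\<omega> \<in> Ystar I" by (auto simp: Ystar_def)
qed

lemma case2: assumes p: "q1 \<rho> \<epsilon> < p" "p \<le> q2 I \<epsilon>"
  shows "common_belief I par \<rho> \<epsilon> p (Gev I) = Ystar I"
proof
  show "common_belief I par \<rho> \<epsilon> p (Gev I) \<subseteq> Ystar I" by (rule common_sub_Ystar[OF p(1)])
  have s1: "Ystar I \<subseteq> Bel (Gev I)"
  proof (rule belief_ge[OF Ystar_Omega])
    fix \<omega> j assume w: "\<omega> \<in> Ystar I" and j: "j \<in> {1..I}"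
    hence "snd \<omega> j" by (auto simp: Ystar_def)
    thus "p \<le> cond_Pr I par \<rho> \<epsilon> (Gev I) (info_cell I j \<omega>)"
      unfolding info_cell_eq using cond_GY[OF j] p q2_le1 by simp
  qed
  have s2: "Ystar I \<subseteq> Bel (Ystar I)"
  proof (rule belief_ge[OF Ystar_Omega])
    fix \<omega> j assume w: "\<omega> \<in> Ystar I" and j: "j \<in> {1..I}"
    hence "snd \<omega> j" by (auto simp: Ystar_def)
    moreover have "\<rho> * ss / (\<rho> * rr j) \<ge> (1-\<epsilon>)^(I-1)"
      by (rule L3[OF r0 rr_pos[OF j] rr_le[OF j] ss_ge I1 e1])
    ultimately show "p \<le> cond_Pr I par \<rho> \<epsilon> (Ystar I) (info_cell I j \<omega>)"
      unfolding info_cell_eq using cond_YsY[OF j] p unfolding q2_def by simp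
  qed
  have D: "Ystar I \<subseteq> (Bel^^Suc l) (Gev I)" for l
  proof (induction l)
    case 0 thus ?case using s1 by simp
  next
    case (Suc l)
    have "Bel (Ystar I) \<subseteq> Bel ((Bel^^Suc l) (Gev I))" by (rule belief_mono[OF Suc])
    thus ?case using s2 by simp
  qed
  show "Ystar I \<subseteq> common_belief I par \<rho> \<epsilon> p (Gev I)"
    unfolding common_belief_def
  proof
    fix \<omega> assume w: "\<omega> \<in> Ystar I"
    have "l \<in> {1..} \<Longrightarrow> \<omega> \<in> (Bel^^l) (Gev I)" for l
      using D[of "l - 1"] w by (cases l) auto
    thus "\<omega> \<in> (\<Inter>l\<in>{1..}. (Bel ^^ l) (Gev I))" by blast
  qed
qed

lemma case3: assumes p: "q2 I \<epsilon> < p" and q: "q1 \<rho> \<epsilon> < q2 I \<epsilon>"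
  shows "common_belief I par \<rho> \<epsilon> p (Gev I) = {}"
proof -
  have p1: "q1 \<rho> \<epsilon> < p" using p q by simp
  obtain f where f: "\<forall>j\<in>{1..I}. (par^^(f j)) j = 0" using reaches[OF tree] by metis
  define L where "L = Suc (\<Sum>j\<in>{1..I}. f j)"
  have fL: "f j \<le> L" if "j \<in> {1..I}" for j
    using member_le_sum[of j "{1..I}" f] that unfolding L_def by auto
  have DL: "(Bel^^L) (Gev I) \<subseteq> Ystar I"
  proof
    fix \<omega> assume w: "\<omega> \<in> (Bel^^L) (Gev I)"
    have "\<omega> \<in> Omega I" using w belief_Omega unfolding L_def by auto
    moreover have "snd \<omega> j" if j: "j \<in> {1..I}" for j
    proof -
      have L1: "1 \<le> L" unfolding L_def by simp
      have "(Bel^^L) (Gev I) \<subseteq> YY I j" using key[OF p1, of "f j"] f j fL[OF j] L1 by blast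
      thus ?thesis using w by (auto simp: YY_def)
    qed
    ultimately show "\<omega> \<in> Ystar I" by (auto simp: Ystar_def)
  qed
  have E: "Bel (Ystar I) = {}"
  proof (rule ccontr)
    assume "Bel (Ystar I) \<noteq> {}"
    then obtain \<omega> where w: "\<omega> \<in> Bel (Ystar I)" by blast
    obtain s where s: "s \<in> {1..I}" "par s = 0" using seed_exists[OF tree I1] by blast
    have c: "p \<le> cond_Pr I par \<rho> \<epsilon> (Ystar I) (info_cell I s \<omega>)"
      using w s unfolding belief_def belief_i_def by auto
    have "\<rho> * ss / (\<rho> * rr s) \<le> (1-\<epsilon>)^(I-1)"
      by (rule L4[OF r0 rr_seed[OF s] ss_le I1 e1])
    moreover have "info_cell I s \<omega> = YY I s \<or> info_cell I s \<omega> = NN I s"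
      unfolding info_cell_eq by simp
    ultimately show False using c p q2_pos cond_YsY[OF s(1)] cond_YsN[OF s(1)] unfolding q2_def
      by auto
  qed
  have "Suc L \<in> {1..}" by simp
  hence "common_belief I par \<rho> \<epsilon> p (Gev I) \<subseteq> (Bel^^Suc L) (Gev I)"
    unfolding common_belief_def by (rule INT_lower)
  also have "\<dots> \<subseteq> Bel (Ystar I)" using belief_mono[OF DL] by simp
  finally show ?thesis using E by simp
qed
end

theorem proposition1:
  fixes I :: nat and \<rho> \<epsilon> \<epsilon>bar p :: real and par :: "nat \<Rightarrow> nat"
  assumes "I \<ge> 2" and "0 < \<rho>" and "\<rho> < 1"
    and "0 < \<epsilon>bar" and "\<epsilon>bar < 1" and "q1 \<rho> \<epsilon>bar = q2 I \<epsilon>bar"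
    and "\<forall>e. 0 < e \<and> e < 1 \<and> q1 \<rho> e = q2 I e \<longrightarrow> e = \<epsilon>bar"
    and "0 < \<epsilon>" and "\<epsilon> < \<epsilon>bar"
    and "is_info_tree I par"
  shows "(p \<le> q1 \<rho> \<epsilon> \<longrightarrow> common_belief I par \<rho> \<epsilon> p (Gev I) = Omega I)
       \<and> (q1 \<rho> \<epsilon> < p \<and> p \<le> q2 I \<epsilon> \<longrightarrow> common_belief I par \<rho> \<epsilon> p (Gev I) = Ystar I)
       \<and> (q2 I \<epsilon> < p \<longrightarrow> common_belief I par \<rho> \<epsilon> p (Gev I) = {})"
proof -
  have I1: "I \<ge> 1" using assms(1) by simp
  have e1: "\<epsilon> < 1" using assms(5,9) by simp
  have "q1 \<rho> \<epsilon> < q1 \<rho> \<epsilon>bar" by (rule L5) (use assms in auto)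
  also have "\<dots> = q2 I \<epsilon>bar" by (rule assms(6))
  also have "\<dots> \<le> q2 I \<epsilon>" by (rule L6) (use assms in auto)
  finally have q: "q1 \<rho> \<epsilon> < q2 I \<epsilon>" .
  note ctx = assms(10) I1 assms(2) assms(3) assms(8) e1
  show ?thesis
    using case1[OF ctx, of p] case2[OF ctx, of p] case3[OF ctx, of p] q by blast
qed

end
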